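(* Let $n\ge1$ be an integer and $\delta\in(0,1)$. Let $K$ be a binomial random variable with parameters $n$ and $p$, and define \[ L_{n,\delta} = \frac{K}{n} + \frac{3}{4}\,\frac{1-\frac{2K}{n}-\sqrt{1+\frac{9}{2\ln\frac{2}{\delta}}\,K\left(1-\frac{K}{n}\right)}}{1+\frac{9n}{8\ln\frac{2}{\delta}}},\qquad U_{n,\delta} = \frac{K}{n} + \frac{3}{4}\,\frac{1-\frac{2K}{n}+\sqrt{1+\frac{9}{2\ln\frac{2}{\delta}}\,K\left(1-\frac{K}{n}\right)}}{1+\frac{9n}{8\ln\frac{2}{\delta}}}. \] For $p\in(0,1)$ define \[ \mathrm{T}^{-}(p) = np + \frac{1-2p-\sqrt{1+\frac{18np(1-p)}{\ln(2/\delta)}}}{\frac{2}{3n}+\frac{3}{\ln(2/\delta)}},\qquad \mathrm{T}^{+}(p) = np + \frac{1-2p+\sqrt{1+\frac{18np(1-p)}{\ln(2/\delta)}}}{\frac{2}{3n}+\frac{3}{\ln(2/\delta)}}, \] and for $k=0,1,\dots,n$ define \[ \mathscr{L}(k) = \frac{k}{n} + \frac{3}{4}\,\frac{1-\frac{2k}{n}-\sqrt{1+\frac{9}{2\ln\frac{2}{\delta}}\,k\left(1-\frac{k}{n}\right)}}{1+\frac{9n}{8\ln\frac{2}{\delta}}},\qquad \mathscr{U}(k) = \frac{k}{n} + \frac{3}{4}\,\frac{1-\frac{2k}{n}+\sqrt{1+\frac{9}{2\ln\frac{2}{\delta}}\,k\left(1-\frac{k}{n}\right)}}{1+\frac{9n}{8\ln\frac{2}{\delta}}}.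 \] For $k\in\{0,\dots,n\}$ with $0<\mathscr{L}(k)<1$ define \[ C_l(k)=\Pr\{\lceil \mathrm{T}^{-}(\mathscr{L}(k))\rceil\le K\le k-1\mid \mathscr{L}(k)\},\qquad C_l'(k)=\Pr\{\lfloor \mathrm{T}^{-}(\mathscr{L}(k))\rfloor+1\le K\le k-1\mid \mathscr{L}(k)\}, \] and for $k\in\{0,\dots,n\}$ with $0<\mathscr{U}(k)<1$ define \[ C_u(k)=\Pr\{k+1\le K\le \lfloor \mathrm{T}^{+}(\mathscr{U}(k))\rfloor\mid \mathscr{U}(k)\},\qquad C_u'(k)=\Pr\{k+1\le K\le \lceil \mathrm{T}^{+}(\mathscr{U}(k))\rceil-1\mid \mathscr{U}(k)\}. \] Then: (I) $\inf_{p\in(0,1)}\Pr\{L_{n,\delta}\le p\le U_{n,\delta}\mid p\}$ equals the minimum of $\{C_l(k):0\le k\le n,\ 0<\mathscr{L}(k)<1\}\cup\{C_u(k):0\le k\le n,\ 0<\mathscr{U}(k)<1\}$. (II) $\inf_{p\in(0,1)}\Pr\{L_{n,\delta}< p< U_{n,\delta}\mid p\}$ equals the minimum of $\{C_l'(k):0\le k\le n,\ 0<\mathscr{L}(k)<1\}\cup\{C_u'(k):0\le k\le n,\ 0<\mathscr{U}(k)<1\}$.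
   Context: $\Pr\{\cdot\mid q\}$ denotes probability when $K$ is binomial with parameters $n$ and success probability $q$. *)

theory Defs
  imports "HOL-Probability.Probability"
begin

text \<open>Lower/upper confidence limit as a function of the observed count k
  (used both for the random limits L, U evaluated at K and for the functions
  script-L, script-U).\<close>
definition confL :: "nat \<Rightarrow> real \<Rightarrow> nat \<Rightarrow> real" where
  "confL n \<delta> k = real k / real n + 3/4 *
     (1 - 2 * real k / real n
        - sqrt (1 + 9 / (2 * ln (2/\<delta>)) * real k * (1 - real k / real n)))
     / (1 + 9 * real n / (8 * ln (2/\<delta>)))"

definition confU :: "nat \<Rightarrow> real \<Rightarrow> nat \<Rightarrow> real" where
  "confU n \<delta> k = real k / real n + 3/4 *
     (1 - 2 * real k / real n
        + sqrt (1 + 9 / (2 * ln (2/\<delta>)) * real k * (1 - real k / real n)))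
     / (1 + 9 * real n / (8 * ln (2/\<delta>)))"

definition Tminus :: "nat \<Rightarrow> real \<Rightarrow> real \<Rightarrow> real" where
  "Tminus n \<delta> p = real n * p +
     (1 - 2 * p - sqrt (1 + 18 * real n * p * (1 - p) / ln (2/\<delta>)))
     / (2 / (3 * real n) + 3 / ln (2/\<delta>))"

definition Tplus :: "nat \<Rightarrow> real \<Rightarrow> real \<Rightarrow> real" where
  "Tplus n \<delta> p = real n * p +
     (1 - 2 * p + sqrt (1 + 18 * real n * p * (1 - p) / ln (2/\<delta>)))
     / (2 / (3 * real n) + 3 / ln (2/\<delta>))"

definition Cl :: "nat \<Rightarrow> real \<Rightarrow> nat \<Rightarrow> real" where
  "Cl n \<delta> k = measure_pmf.prob (binomial_pmf n (confL n \<delta> k))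
     {K. \<lceil>Tminus n \<delta> (confL n \<delta> k)\<rceil> \<le> int K \<and> int K \<le> int k - 1}"

definition Cl' :: "nat \<Rightarrow> real \<Rightarrow> nat \<Rightarrow> real" where
  "Cl' n \<delta> k = measure_pmf.prob (binomial_pmf n (confL n \<delta> k))
     {K. \<lfloor>Tminus n \<delta> (confL n \<delta> k)\<rfloor> + 1 \<le> int K \<and> int K \<le> int k - 1}"

definition Cu :: "nat \<Rightarrow> real \<Rightarrow> nat \<Rightarrow> real" where
  "Cu n \<delta> k = measure_pmf.prob (binomial_pmf n (confU n \<delta> k))
     {K. int k + 1 \<le> int K \<and> int K \<le> \<lfloor>Tplus n \<delta> (confU n \<delta> k)\<rfloor>}"

definition Cu' :: "nat \<Rightarrow> real \<Rightarrow> nat \<Rightarrow> real" where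
  "Cu' n \<delta> k = measure_pmf.prob (binomial_pmf n (confU n \<delta> k))
     {K. int k + 1 \<le> int K \<and> int K \<le> \<lceil>Tplus n \<delta> (confU n \<delta> k)\<rceil> - 1}"

end

theory Submission
  imports Defs
begin


locale bci =
  fixes n :: nat and c :: real
  assumes n1: "n \<ge> 1" and c0: "c > 0"
begin

definition LL :: "real \<Rightarrow> real" where
  "LL k = k / real n + 3/4 * (1 - 2 * k / real n - sqrt (1 + 9 / (2 * c) * k * (1 - k / real n))) / (1 + 9 * real n / (8 * c))"
definition UU :: "real \<Rightarrow> real" where
  "UU k = k / real n + 3/4 * (1 - 2 * k / real n + sqrt (1 + 9 / (2 * c) * k * (1 - k / real n))) / (1 + 9 * real n / (8 * c))"
definition TM :: "real \<Rightarrow> real" where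
  "TM p = real n * p + (1 - 2 * p - sqrt (1 + 18 * real n * p * (1 - p) / c)) / (2 / (3 * real n) + 3 / c)"
definition TP :: "real \<Rightarrow> real" where
  "TP p = real n * p + (1 - 2 * p + sqrt (1 + 18 * real n * p * (1 - p) / c)) / (2 / (3 * real n) + 3 / c)"
definition QQ :: "real \<Rightarrow> real \<Rightarrow> real" where
  "QQ k p = (2*c + 9*real n) * (k - real n*p)^2 - 6*real n*c*(1-2*p)*(k-real n*p) - 18*(real n)^2*c*p*(1-p)"
definition DD :: "real \<Rightarrow> real" where "DD k = 1 + 9 / (2 * c) * k * (1 - k / real n)"
definition EE :: "real \<Rightarrow> real" where "EE p = 1 + 18 * real n * p * (1 - p) / c"
definition mm :: "real \<Rightarrow> real" where "mm k = k / real n + 3/4 * (1 - 2 * k / real n) / (1 + 9 * real n / (8 * c))"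
definition mu :: "real \<Rightarrow> real" where "mu p = real n * p + (1 - 2 * p) / (2 / (3 * real n) + 3 / c)"

lemma npos: "real n > 0" using n1 by simp

definition Gp :: "real \<Rightarrow> real \<Rightarrow> real" where
  "Gp k p = (8*c+9*real n)*(real n*p-k) - 6*c*(real n-2*k)"
definition Gk :: "real \<Rightarrow> real \<Rightarrow> real" where
  "Gk k p = (2*c+9*real n)*(k-real n*p) - 3*real n*c*(1-2*p)"
definition qf :: "real \<Rightarrow> real \<Rightarrow> real" where
  "qf a b = (2*c+9*real n)*(a-real n*b)^2 + 2*(6*real n*c)*b*(a-real n*b) + 18*(real n)^2*c*b^2"

lemma QQ_p: "(8*c+9*real n) * QQ k p = (Gp k p)^2 - (36*(real n)^2*c^2 + 162*real n*c*k*(real n-k))"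
  unfolding QQ_def Gp_def power2_eq_square by (simp add: algebra_simps)

lemma QQ_k: "(2*c+9*real n) * QQ k p = (Gk k p)^2 - (9*(real n)^2*c^2 + 162*(real n)^3*c*p*(1-p))"
  unfolding QQ_def Gk_def power2_eq_square by (simp add: algebra_simps power3_eq_cube)

lemma I1: "QQ k p + 2*Gk k p*(real n-k) + 2*real n*Gp k p*(1-p) + qf (real n-k) (1-p) = 0"
  unfolding QQ_def Gk_def Gp_def qf_def power2_eq_square by (simp add: algebra_simps)

lemma I0: "QQ k p - 2*Gk k p*k - 2*real n*Gp k p*p + qf k p = 0"
  unfolding QQ_def Gk_def Gp_def qf_def power2_eq_square by (simp add: algebra_simps)

lemma qf_alt: "(2*c+9*real n) * qf a b = ((2*c+9*real n)*(a-real n*b) + 6*real n*c*b)^2 + 162*(real n)^3*c*b^2"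
  unfolding qf_def power2_eq_square by (simp add: algebra_simps power3_eq_cube)

lemma qf_nonneg: "qf a b \<ge> 0"
proof -
  have "(2*c+9*real n) * qf a b \<ge> 0" unfolding qf_alt using npos c0 by (intro add_nonneg_nonneg) auto
  moreover have "2*c+9*real n > 0" using npos c0 by simp
  ultimately show ?thesis by (simp add: zero_le_mult_iff)
qed

lemma qf_pos: "b \<noteq> 0 \<Longrightarrow> qf a b > 0"
proof -
  assume b: "b \<noteq> 0"
  have "162*(real n)^3*c*b^2 > 0" using npos c0 b by simp
  hence "(2*c+9*real n) * qf a b > 0" unfolding qf_alt by (smt (verit) zero_le_power2)
  moreover have "2*c+9*real n > 0" using npos c0 by simp
  ultimately show ?thesis by (simp add: zero_less_mult_iff)
qed

lemma KEY:
  assumes k: "0 \<le> k" "k \<le> real n" and p: "0 < p" "p < 1" and Q: "QQ k p \<ge> 0"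
  shows "Gp k p \<ge> 0 \<longleftrightarrow> Gk k p \<le> 0"
proof
  assume g: "Gp k p \<ge> 0"
  show "Gk k p \<le> 0"
  proof (rule ccontr)
    assume "\<not> Gk k p \<le> 0"
    hence "Gk k p*(real n-k) \<ge> 0" using k by simp
    moreover have "real n*Gp k p*(1-p) \<ge> 0" using g p npos by simp
    moreover have "qf (real n-k) (1-p) > 0" using p by (intro qf_pos) simp
    ultimately show False using I1[of k p] Q by linarith
  qed
next
  assume g: "Gk k p \<le> 0"
  show "Gp k p \<ge> 0"
  proof (rule ccontr)
    assume "\<not> Gp k p \<ge> 0"
    hence "real n*Gp k p*p < 0" using p npos by (simp add: mult_pos_neg mult_neg_pos)
    moreover have "Gk k p*k \<le> 0" using k g by (simp add: mult_nonpos_nonneg)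
    moreover have "qf k p \<ge> 0" by (rule qf_nonneg)
    ultimately show False using I0[of k p] Q by linarith
  qed
qed

lemma DD_ge: "0 \<le> k \<Longrightarrow> k \<le> real n \<Longrightarrow> DD k \<ge> 1"
  unfolding DD_def using npos c0 by (simp add: field_simps mult_left_mono)

lemma EE_ge: "0 \<le> p \<Longrightarrow> p \<le> 1 \<Longrightarrow> EE p \<ge> 1"
  unfolding EE_def using npos c0 by (simp add: field_simps mult_left_mono mult_right_mono)

lemma Rp_sq: "0 \<le> k \<Longrightarrow> k \<le> real n \<Longrightarrow> (6*real n*c* sqrt (DD k))^2 = 36*(real n)^2*c^2 + 162*real n*c*k*(real n-k)"
proof -
  assume "0 \<le> k" "k \<le> real n"
  hence "DD k \<ge> 0" using DD_ge by force
  hence "(6*real n*c* sqrt (DD k))^2 = 36*(real n)^2*c^2 * DD k" by (simp add: power_mult_distrib)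
  also have "\<dots> = 36*(real n)^2*c^2 + 162*real n*c*k*(real n-k)"
    unfolding DD_def using npos c0 by (simp add: field_simps power2_eq_square)
  finally show ?thesis .
qed

lemma Rk_sq: "0 \<le> p \<Longrightarrow> p \<le> 1 \<Longrightarrow> (3*real n*c* sqrt (EE p))^2 = 9*(real n)^2*c^2 + 162*(real n)^3*c*p*(1-p)"
proof -
  assume "0 \<le> p" "p \<le> 1"
  hence "EE p \<ge> 0" using EE_ge by force
  hence "(3*real n*c* sqrt (EE p))^2 = 9*(real n)^2*c^2 * EE p" by (simp add: power_mult_distrib)
  also have "\<dots> = 9*(real n)^2*c^2 + 162*(real n)^3*c*p*(1-p)"
    unfolding EE_def using npos c0 by (simp add: field_simps power2_eq_square power3_eq_cube)
  finally show ?thesis .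
qed

lemma Bform: "2 / (3 * real n) + 3 / c = (2*c+9*real n)/(3*real n*c)"
  using npos c0 by (simp add: field_simps)
lemma Aform: "1 + 9 * real n / (8 * c) = (8*c+9*real n)/(8*c)"
  using npos c0 by (simp add: field_simps)
lemma apos: "8*c+9*real n > 0" "2*c+9*real n > 0" using npos c0 by auto

lemma Afrac: "3/4 * X / (1 + 9 * real n / (8 * c)) = 6*c*X/(8*c+9*real n)"
  unfolding Aform using c0 apos by (simp add: field_simps)
lemma gL: "(N::real) > 0 \<Longrightarrow> (A::real) > 0 \<Longrightarrow> N*A*(p - (k / N + 6*c*(1 - 2 * k / N - w) / A)) = A*(N*p-k) - 6*c*(N-2*k) + 6*N*c * w"
  by (simp add: field_simps)
lemma gU: "(N::real) > 0 \<Longrightarrow> (A::real) > 0 \<Longrightarrow> N*A*((k / N + 6*c*(1 - 2 * k / N + w) / A) - p) = 6*N*c * w - (A*(N*p-k) - 6*c*(N-2*k))"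
  by (simp add: field_simps)
lemma gen_rel_L: "real n*(8*c+9*real n)*(p - (k / real n + 3/4 * (1 - 2 * k / real n - w) / (1 + 9 * real n / (8 * c)))) = Gp k p + 6*real n*c * w"
proof -
  have "real n*(8*c+9*real n)*(p - (k / real n + 6*c*(1 - 2 * k / real n - w) / (8*c+9*real n))) = Gp k p + 6*real n*c * w"
    unfolding Gp_def using gL[OF npos apos(1)] by simp
  thus ?thesis unfolding Afrac .
qed
lemma gen_rel_U: "real n*(8*c+9*real n)*((k / real n + 3/4 * (1 - 2 * k / real n + w) / (1 + 9 * real n / (8 * c))) - p) = 6*real n*c * w - Gp k p"
proof -
  have "real n*(8*c+9*real n)*((k / real n + 6*c*(1 - 2 * k / real n + w) / (8*c+9*real n)) - p) = 6*real n*c * w - Gp k p"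
    unfolding Gp_def using gU[OF npos apos(1)] by simp
  thus ?thesis unfolding Afrac .
qed
lemma gen_rel_TP: "(2*c+9*real n)*((real n * p + (1 - 2 * p + w) / (2 / (3 * real n) + 3 / c)) - k) = 3*real n*c * w - Gk k p"
  unfolding Gk_def Bform using npos c0 apos by (simp add: field_simps)
lemma gen_rel_TM: "(2*c+9*real n)*(k - (real n * p + (1 - 2 * p - w) / (2 / (3 * real n) + 3 / c))) = Gk k p + 3*real n*c * w"
  unfolding Gk_def Bform using npos c0 apos by (simp add: field_simps)

lemma LL_rel: "real n*(8*c+9*real n)*(p - LL k) = Gp k p + 6*real n*c * sqrt (DD k)"
  unfolding LL_def DD_def[symmetric] by (rule gen_rel_L)
lemma UU_rel: "real n*(8*c+9*real n)*(UU k - p) = 6*real n*c * sqrt (DD k) - Gp k p"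
  unfolding UU_def DD_def[symmetric] by (rule gen_rel_U)
lemma TP_rel: "(2*c+9*real n)*(TP p - k) = 3*real n*c * sqrt (EE p) - Gk k p"
  unfolding TP_def EE_def[symmetric] by (rule gen_rel_TP)
lemma TM_rel: "(2*c+9*real n)*(k - TM p) = Gk k p + 3*real n*c * sqrt (EE p)"
  unfolding TM_def EE_def[symmetric] by (rule gen_rel_TM)

lemma sq_le: "(y::real) \<ge> 0 \<Longrightarrow> (x^2 \<le> y^2 \<longleftrightarrow> -y \<le> x \<and> x \<le> y)"
  using abs_le_square_iff[of x y] by (auto simp add: abs_le_iff)
lemma sq_less: "(y::real) \<ge> 0 \<Longrightarrow> (x^2 < y^2 \<longleftrightarrow> -y < x \<and> x < y)"
  using abs_le_square_iff[of y x] by (auto simp add: abs_le_iff not_le[symmetric])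

lemma possign: "(a::real) > 0 \<Longrightarrow> a * x = y \<Longrightarrow> (0 \<le> y \<longleftrightarrow> 0 \<le> x) \<and> (0 < y \<longleftrightarrow> 0 < x)"
  by (auto simp: zero_le_mult_iff zero_less_mult_iff)

lemma facts:
  assumes k: "0 \<le> k" "k \<le> real n" and p: "0 < p" "p < 1"
  shows "(LL k \<le> p \<longleftrightarrow> k \<le> TP p) \<and> (LL k < p \<longleftrightarrow> k < TP p) \<and>
         (p \<le> UU k \<longleftrightarrow> TM p \<le> k) \<and> (p < UU k \<longleftrightarrow> TM p < k)"
proof -
  define R where "R = 6*real n*c * sqrt (DD k)"
  define R' where "R' = 3*real n*c * sqrt (EE p)"
  have Rp: "R > 0" unfolding R_def using DD_ge[OF k] npos c0 by simp
  have R'p: "R' > 0" unfolding R'_def using EE_ge[of p] p npos c0 by simp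
  have N1: "real n*(8*c+9*real n) > 0" using npos apos by simp
  have e1: "LL k \<le> p \<longleftrightarrow> Gp k p + R \<ge> 0"
    using possign[OF N1 LL_rel[of p k]] unfolding R_def by linarith
  have e2: "LL k < p \<longleftrightarrow> Gp k p + R > 0"
    using possign[OF N1 LL_rel[of p k]] unfolding R_def by linarith
  have e3: "p \<le> UU k \<longleftrightarrow> R - Gp k p \<ge> 0"
    using possign[OF N1 UU_rel[of k p]] unfolding R_def by linarith
  have e4: "p < UU k \<longleftrightarrow> R - Gp k p > 0"
    using possign[OF N1 UU_rel[of k p]] unfolding R_def by linarith
  have f1: "k \<le> TP p \<longleftrightarrow> R' - Gk k p \<ge> 0"
    using possign[OF apos(2) TP_rel[of p k]] unfolding R'_def by linarith
  have f2: "k < TP p \<longleftrightarrow> R' - Gk k p > 0"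
    using possign[OF apos(2) TP_rel[of p k]] unfolding R'_def by linarith
  have f3: "TM p \<le> k \<longleftrightarrow> Gk k p + R' \<ge> 0"
    using possign[OF apos(2) TM_rel[of k p]] unfolding R'_def by linarith
  have f4: "TM p < k \<longleftrightarrow> Gk k p + R' > 0"
    using possign[OF apos(2) TM_rel[of k p]] unfolding R'_def by linarith
  have q1: "(8*c+9*real n) * QQ k p = (Gp k p)^2 - R^2" using QQ_p Rp_sq[OF k] unfolding R_def by simp
  have q2: "(2*c+9*real n) * QQ k p = (Gk k p)^2 - R'^2" using QQ_k Rk_sq[of p] p unfolding R'_def by simp
  have K: "QQ k p \<ge> 0 \<Longrightarrow> (Gp k p \<ge> 0 \<longleftrightarrow> Gk k p \<le> 0)" using KEY[OF k p] by blast
  show ?thesis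
  proof (cases "QQ k p < 0")
    case True
    have "(8*c+9*real n) * QQ k p < 0" "(2*c+9*real n) * QQ k p < 0"
      using True apos by (simp_all add: mult_pos_neg)
    hence "(Gp k p)^2 < R^2" "(Gk k p)^2 < R'^2" using q1 q2 by simp_all
    hence "-R < Gp k p \<and> Gp k p < R" "-R' < Gk k p \<and> Gk k p < R'"
      using sq_less Rp R'p by (simp_all add: less_imp_le)
    thus ?thesis using e1 e2 e3 e4 f1 f2 f3 f4 by linarith
  next
    case False
    hence Q: "QQ k p \<ge> 0" by simp
    have "(8*c+9*real n) * QQ k p \<ge> 0" "(2*c+9*real n) * QQ k p \<ge> 0"
      using Q apos by simp_all
    hence "(Gp k p)^2 \<ge> R^2" "(Gk k p)^2 \<ge> R'^2" using q1 q2 by simp_all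
    hence g: "\<not> (-R < Gp k p \<and> Gp k p < R)" "\<not> (-R' < Gk k p \<and> Gk k p < R')"
      using sq_less[of R "Gp k p"] sq_less[of R' "Gk k p"] Rp R'p by (simp_all add: not_less[symmetric])
    have KK: "Gp k p \<ge> 0 \<longleftrightarrow> Gk k p \<le> 0" using K Q by blast
    have z1: "QQ k p = 0 \<longleftrightarrow> (Gp k p)^2 = R^2" using q1 apos by (metis eq_iff_diff_eq_0 mult_eq_0_iff less_irrefl)
    have z2: "QQ k p = 0 \<longleftrightarrow> (Gk k p)^2 = R'^2" using q2 apos by (metis eq_iff_diff_eq_0 mult_eq_0_iff less_irrefl)
    have sqe: "x^2 = y^2 \<longleftrightarrow> x = y \<or> x = -y" for x y :: real by (simp add: power2_eq_iff)
    have cc: "(Gp k p \<ge> R \<and> Gk k p \<le> -R' \<and> (Gp k p = R \<longleftrightarrow> Gk k p = -R')) \<or>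
              (Gp k p \<le> -R \<and> Gk k p \<ge> R' \<and> (Gp k p = -R \<longleftrightarrow> Gk k p = R'))"
    proof (cases "Gp k p \<ge> 0")
      case True
      hence h: "Gk k p \<le> 0" using KK by blast
      hence "Gp k p \<ge> R" "Gk k p \<le> -R'" using True g Rp R'p by linarith+
      moreover have "Gp k p = R \<longleftrightarrow> Gk k p = -R'"
        using z1 z2 sqe[of "Gp k p" R] sqe[of "Gk k p" R'] calculation Rp R'p by auto
      ultimately show ?thesis by blast
    next
      case False
      hence h: "\<not> Gk k p \<le> 0" using KK by blast
      hence "Gp k p \<le> -R" "Gk k p \<ge> R'" using False g Rp R'p by linarith+
      moreover have "Gp k p = -R \<longleftrightarrow> Gk k p = R'"
        using z1 z2 sqe[of "Gp k p" R] sqe[of "Gk k p" R'] calculation Rp R'p by auto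
      ultimately show ?thesis by blast
    qed
    show ?thesis unfolding e1 e2 e3 e4 f1 f2 f3 f4 using cc Rp R'p
      by (elim disjE) auto
  qed
qed

end



definition bp :: "nat \<Rightarrow> nat \<Rightarrow> real \<Rightarrow> real" where
  "bp n K q = real (n choose K) * q^K * (1-q)^(n-K)"
definition hh :: "nat \<Rightarrow> nat \<Rightarrow> real \<Rightarrow> real" where
  "hh n K q = (if K = 0 then 0 else real ((n-1) choose (K-1)) * q^(K-1) * (1-q)^(n-K))"

lemma bp_nonneg: "0 \<le> q \<Longrightarrow> q \<le> 1 \<Longrightarrow> bp n K q \<ge> 0"
  unfolding bp_def by simp
lemma hh_nonneg: "0 \<le> q \<Longrightarrow> q \<le> 1 \<Longrightarrow> hh n K q \<ge> 0"
  unfolding hh_def by simp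

lemma bp_deriv:
  assumes "n \<ge> 1"
  shows "((bp n K) has_field_derivative (real n * (hh n K q - hh n (Suc K) q))) (at q)"
proof -
  have d: "((bp n K) has_field_derivative
     real (n choose K) * (real K * q^(K-1) * (1-q)^(n-K) - q^K * (real (n-K) * (1-q)^(n-K-1)))) (at q)"
    unfolding bp_def by (auto intro!: derivative_eq_intros simp: algebra_simps)
  have e1: "real (n choose K) * (real K * q^(K-1) * (1-q)^(n-K)) = real n * hh n K q"
  proof (cases K)
    case 0 thus ?thesis by (simp add: hh_def)
  next
    case (Suc j)
    have "K * (n choose K) = n * ((n - 1) choose (K - 1))" using Suc by (intro times_binomial_minus1_eq) simp
    hence H: "real K * real (n choose K) = real n * real ((n - 1) choose j)" using Suc
      by (metis of_nat_mult diff_Suc_1)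
    have "real (n choose K) * (real K * q^(K-1) * (1-q)^(n-K)) = (real K * real (n choose K)) * (q^j * (1-q)^(n-K))"
      using Suc by (simp add: algebra_simps)
    also have "\<dots> = real n * real ((n - 1) choose j) * (q^j * (1-q)^(n-K))" by (simp only: H)
    also have "\<dots> = real n * hh n K q" using Suc by (simp add: hh_def algebra_simps)
    finally show ?thesis .
  qed
  have e2: "real (n choose K) * (q^K * (real (n-K) * (1-q)^(n-K-1))) = real n * hh n (Suc K) q"
  proof -
    have "(n - K) * (n choose K) = n * ((n - 1) choose K)" by (rule binomial_absorb_comp)
    hence "real (n-K) * real (n choose K) = real n * real ((n - 1) choose K)"
      by (metis of_nat_mult)
    moreover have "n - K - 1 = n - Suc K" by simp
    ultimately show ?thesis unfolding hh_def by (simp add: algebra_simps)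
  qed
  show ?thesis using d e1 e2 by (simp add: right_diff_distrib)
qed

definition gs :: "nat \<Rightarrow> nat \<Rightarrow> nat \<Rightarrow> real \<Rightarrow> real" where
  "gs n a b q = (\<Sum>K\<in>{a..b}. bp n K q)"

lemma gs_deriv:
  assumes "n \<ge> 1" "a \<le> Suc b"
  shows "((gs n a b) has_field_derivative (real n * (hh n a q - hh n (Suc b) q))) (at q)"
proof -
  have "((\<lambda>q. \<Sum>K\<in>{a..b}. bp n K q) has_field_derivative (\<Sum>K\<in>{a..b}. real n * (hh n K q - hh n (Suc K) q))) (at q)"
    by (intro DERIV_sum bp_deriv assms(1))
  moreover have "(\<Sum>K\<in>{a..b}. real n * (hh n K q - hh n (Suc K) q)) = real n * (hh n a q - hh n (Suc b) q)"
  proof -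
    have t: "(\<Sum>K\<in>{a..b}. (hh n (Suc K) q - hh n K q)) = hh n (Suc b) q - hh n a q"
      using sum_Suc_diff[OF assms(2), of "\<lambda>K. hh n K q"] by simp
    have "(\<Sum>K\<in>{a..b}. (hh n K q - hh n (Suc K) q)) = hh n a q - hh n (Suc b) q"
      using t unfolding sum_subtractf by linarith
    thus ?thesis by (simp add: sum_distrib_left[symmetric])
  qed
  ultimately show ?thesis unfolding gs_def[abs_def] by simp
qed

lemma single_cross:
  assumes n: "n \<ge> 1" and ab: "a \<le> b" "b \<le> n" and x: "0 < x" "x < y" "y < 1"
    and neg: "hh n a x - hh n (Suc b) x < 0"
  shows "hh n a y - hh n (Suc b) y < 0"
proof (cases a)
  case 0
  hence "real ((n-1) choose b) > 0" using neg x by (simp add: hh_def zero_less_mult_iff)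
  then show ?thesis using \<open>a = 0\<close> x by (simp add: hh_def)
next
  case (Suc a')
  show ?thesis
  proof (cases "b = n")
    case True
    then have "hh n (Suc b) x = 0" using n by (simp add: hh_def)
    then show ?thesis using neg hh_nonneg[of x n a] x by simp
  next
    case False
    hence bn: "b < n" using ab by simp
    define d where "d = b - a'"
    have d1: "d \<ge> 1" using ab Suc unfolding d_def by simp
    define C1 where "C1 = real ((n-1) choose a')"
    define C2 where "C2 = real ((n-1) choose b)"
    have C1: "C1 \<ge> 0" unfolding C1_def by simp
    have C2: "C2 \<ge> 0" unfolding C2_def by simp
    have form: "hh n a q - hh n (Suc b) q = q^a' * (1-q)^(n - Suc b) * (C1 * (1-q)^d - C2 * q^d)" for q
    proof -
      have e1: "n - a = (n - Suc b) + d" using Suc bn ab unfolding d_def by simp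
      have e2: "b = a' + d" using Suc ab unfolding d_def by simp
      have h1: "hh n a q = C1 * q^a' * ((1-q)^(n - Suc b) * (1-q)^d)"
        unfolding hh_def C1_def using Suc e1 by (simp add: power_add)
      have h2: "hh n (Suc b) q = C2 * (q^a' * q^d) * (1-q)^(n - Suc b)"
        unfolding hh_def C2_def by (simp add: power_add[symmetric] e2[symmetric])
      show ?thesis unfolding h1 h2 by (simp add: algebra_simps)
    qed
    have w: "q^a' * (1-q)^(n - Suc b) > 0" if "0 < q" "q < 1" for q::real using that by simp
    have "C1 * (1-x)^d - C2 * x^d < 0"
      using neg form[of x] w[of x] x by (simp add: mult_less_0_iff)
    moreover have "(1-y)^d \<le> (1-x)^d" using x by (intro power_mono) auto
    moreover have "x^d \<le> y^d" using x by (intro power_mono) auto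
    ultimately have "C1 * (1-y)^d - C2 * y^d < 0"
      using C1 C2 mult_left_mono[of "(1-y)^d" "(1-x)^d" C1] mult_left_mono[of "x^d" "y^d" C2] by linarith
    thus ?thesis using form[of y] w[of y] x by (simp add: mult_pos_neg)
  qed
qed

lemma quasi_concave:
  assumes n: "n \<ge> 1" and ab: "a \<le> b" "b \<le> n" and rps: "0 \<le> r" "r \<le> p" "p \<le> s" "s \<le> 1"
  shows "gs n a b p \<ge> min (gs n a b r) (gs n a b s)"
proof (rule ccontr)
  assume "\<not> ?thesis"
  hence lt: "gs n a b p < gs n a b r" "gs n a b p < gs n a b s" by auto
  hence rp: "r < p" and ps: "p < s" using rps by (auto simp: order.order_iff_strict)
  have ab': "a \<le> Suc b" using ab by simp
  obtain z1 where z1: "r < z1" "z1 < p" "gs n a b p - gs n a b r = (p - r) * (real n * (hh n a z1 - hh n (Suc b) z1))"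
    using MVT2[OF rp, of "gs n a b" "\<lambda>q. real n * (hh n a q - hh n (Suc b) q)"] gs_deriv[OF n ab'] by blast
  obtain z2 where z2: "p < z2" "z2 < s" "gs n a b s - gs n a b p = (s - p) * (real n * (hh n a z2 - hh n (Suc b) z2))"
    using MVT2[OF ps, of "gs n a b" "\<lambda>q. real n * (hh n a q - hh n (Suc b) q)"] gs_deriv[OF n ab'] by blast
  have np: "real n > 0" using n by simp
  have "(p - r) * (real n * (hh n a z1 - hh n (Suc b) z1)) < 0" using z1 lt by simp
  hence "hh n a z1 - hh n (Suc b) z1 < 0" using rp np by (simp add: mult_less_0_iff)
  hence "hh n a z2 - hh n (Suc b) z2 < 0"
    using single_cross[OF n ab, of z1 z2] z1 z2 rps by simp
  hence "(s - p) * (real n * (hh n a z2 - hh n (Suc b) z2)) < 0" using ps np by (simp add: mult_pos_neg)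
  thus False using z2 lt by simp
qed

lemma prob_eq:
  assumes "0 \<le> q" "q \<le> 1"
  shows "measure_pmf.prob (binomial_pmf n q) A = (\<Sum>K\<in>A \<inter> {..n}. bp n K q)"
proof -
  have sub: "set_pmf (binomial_pmf n q) \<subseteq> {..n}" using assms by (auto simp: set_pmf_binomial_eq)
  have "measure_pmf.prob (binomial_pmf n q) A = measure_pmf.prob (binomial_pmf n q) (A \<inter> set_pmf (binomial_pmf n q))"
    by (simp add: measure_Int_set_pmf)
  also have "A \<inter> set_pmf (binomial_pmf n q) = (A \<inter> {..n}) \<inter> set_pmf (binomial_pmf n q)" using sub by blast
  also have "measure_pmf.prob (binomial_pmf n q) \<dots> = measure_pmf.prob (binomial_pmf n q) (A \<inter> {..n})"
    by (simp add: measure_Int_set_pmf)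
  also have "\<dots> = (\<Sum>K\<in>A \<inter> {..n}. pmf (binomial_pmf n q) K)" by (simp add: measure_measure_pmf_finite)
  also have "\<dots> = (\<Sum>K\<in>A \<inter> {..n}. bp n K q)" using assms by (simp add: bp_def)
  finally show ?thesis .
qed

lemma gs_0: "gs n 0 b 0 = 1"
proof -
  have "gs n 0 b 0 = (\<Sum>K\<in>{0..b}. if K = 0 then 1 else 0)" unfolding gs_def bp_def
    by (intro sum.cong) auto
  thus ?thesis by simp
qed

lemma gs_1: "a \<le> n \<Longrightarrow> gs n a n 1 = 1"
proof -
  assume "a \<le> n"
  have "gs n a n 1 = (\<Sum>K\<in>{a..n}. if K = n then 1 else 0)" unfolding gs_def bp_def
    by (intro sum.cong) auto
  thus ?thesis using \<open>a \<le> n\<close> by simp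
qed

lemma bp_cont: "isCont (\<lambda>q. \<Sum>K\<in>A. bp n K q) x"
  unfolding bp_def by (intro continuous_intros)




context bci begin

lemma LL0: "LL 0 = 0" unfolding LL_def by simp
lemma UUn: "UU (real n) = 1" unfolding UU_def using npos by simp

lemma sqrtDD: "0 \<le> k \<Longrightarrow> k \<le> real n \<Longrightarrow> sqrt (DD k) \<ge> 1"
  using DD_ge by simp

lemma UU_pos: assumes "0 \<le> k" "k \<le> real n" shows "UU k > 0"
proof -
  have s: "sqrt (DD k) \<ge> 1" using sqrtDD assms by simp
  have "6*real n*c * sqrt (DD k) - Gp k 0 > 0"
  proof -
    have "6*real n*c * sqrt (DD k) \<ge> 6*real n*c" using s npos c0 by simp
    moreover have "Gp k 0 = -((8*c+9*real n)*k) - 6*c*(real n-2*k)" unfolding Gp_def by (simp add: algebra_simps)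
    moreover have "(8*c+9*real n)*k + 12*c*(real n - k) > 0"
    proof (cases "k = real n")
      case True thus ?thesis using npos apos by simp
    next
      case False hence "real n - k > 0" using assms by simp
      thus ?thesis using apos assms c0 by (simp add: add_nonneg_pos)
    qed
    ultimately show ?thesis by (simp add: algebra_simps)
  qed
  hence "real n*(8*c+9*real n)*(UU k - 0) > 0" using UU_rel[of k 0] by simp
  thus ?thesis using npos apos zero_less_mult_pos[of "real n*(8*c+9*real n)" "UU k - 0"] by simp
qed

lemma LL_lt1: assumes "0 \<le> k" "k \<le> real n" shows "LL k < 1"
proof -
  have s: "sqrt (DD k) \<ge> 1" using sqrtDD assms by simp
  have "Gp k 1 + 6*real n*c * sqrt (DD k) > 0"
  proof -
    have "6*real n*c * sqrt (DD k) \<ge> 6*real n*c" using s npos c0 by simp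
    moreover have "Gp k 1 = (8*c+9*real n)*(real n - k) - 6*c*(real n-2*k)" unfolding Gp_def by simp
    moreover have "(8*c+9*real n)*(real n - k) + 12*c*k > 0"
    proof (cases "k = 0")
      case True thus ?thesis using npos apos by simp
    next
      case False hence "k > 0" using assms by simp
      thus ?thesis using apos assms c0 by (simp add: add_nonneg_pos)
    qed
    ultimately show ?thesis by (simp add: algebra_simps)
  qed
  hence "real n*(8*c+9*real n)*(1 - LL k) > 0" using LL_rel[of 1 k] by simp
  thus ?thesis using npos apos zero_less_mult_pos[of "real n*(8*c+9*real n)" "1 - LL k"] by simp
qed

lemma fN:
  assumes "K \<le> n" "0 < p" "p < 1"
  shows "(LL (real K) \<le> p \<longleftrightarrow> real K \<le> TP p) \<and> (LL (real K) < p \<longleftrightarrow> real K < TP p) \<and>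
         (p \<le> UU (real K) \<longleftrightarrow> TM p \<le> real K) \<and> (p < UU (real K) \<longleftrightarrow> TM p < real K)"
  using facts[of "real K" p] assms by simp

lemma UUp: "K \<le> n \<Longrightarrow> UU (real K) > 0" using UU_pos by simp
lemma LLl: "K \<le> n \<Longrightarrow> LL (real K) < 1" using LL_lt1 by simp

lemma sub_le:
  assumes "0 \<le> q" "q \<le> 1" "T \<inter> {..n} \<subseteq> {a..b}"
  shows "measure_pmf.prob (binomial_pmf n q) T \<le> gs n a b q"
  unfolding prob_eq[OF assms(1,2)] gs_def
  by (rule sum_mono2) (use assms bp_nonneg in auto)

definition Cl1 :: "nat \<Rightarrow> real" where
  "Cl1 k = measure_pmf.prob (binomial_pmf n (LL (real k)))
          {K. \<lceil>TM (LL (real k))\<rceil> \<le> int K \<and> int K \<le> int k - 1}"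
definition Cu1 :: "nat \<Rightarrow> real" where
  "Cu1 k = measure_pmf.prob (binomial_pmf n (UU (real k)))
          {K. int k + 1 \<le> int K \<and> int K \<le> \<lfloor>TP (UU (real k))\<rfloor>}"

definition good1 :: "real \<Rightarrow> bool" where
  "good1 x \<longleftrightarrow> x \<ge> 1 \<or> (\<exists>k\<le>n.
     (0 < LL (real k) \<and> LL (real k) < 1 \<and> Cl1 k \<le> x) \<or>
     (0 < UU (real k) \<and> UU (real k) < 1 \<and> Cu1 k \<le> x))"

lemma good1_mono: "good1 x \<Longrightarrow> x \<le> y \<Longrightarrow> good1 y"
  unfolding good1_def by (meson order_trans)

lemma lowerI:
  assumes p: "0 < p" "p < 1"
  shows "good1 (measure_pmf.prob (binomial_pmf n p) {K. LL (real K) \<le> p \<and> p \<le> UU (real K)})"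
proof -
  define S where "S = {K. K \<le> n \<and> LL (real K) \<le> p \<and> p \<le> UU (real K)}"
  have F: "measure_pmf.prob (binomial_pmf n p) {K. LL (real K) \<le> p \<and> p \<le> UU (real K)} = (\<Sum>K\<in>S. bp n K p)"
    using p by (subst prob_eq) (auto simp: S_def intro!: sum.cong)
  have Fnn: "(\<Sum>K\<in>S. bp n K p) \<ge> 0" using p by (intro sum_nonneg bp_nonneg) auto
  have memS: "K \<le> n \<Longrightarrow> K \<in> S \<longleftrightarrow> TM p \<le> real K \<and> real K \<le> TP p" for K
    using fN[of K p] p unfolding S_def by auto
  show ?thesis
  proof (cases "S = {}")
    case True
    define K0 where "K0 = Max {K. K \<le> n \<and> LL (real K) \<le> p}"
    have fin: "finite {K. K \<le> n \<and> LL (real K) \<le> p}" by simp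
    have ne: "0 \<in> {K. K \<le> n \<and> LL (real K) \<le> p}" using LL0 p by simp
    have K0: "K0 \<le> n" "LL (real K0) \<le> p" using Max_in[OF fin] ne unfolding K0_def by blast+
    have "K0 \<notin> S" using True by simp
    hence U0: "UU (real K0) < p" using K0 unfolding S_def by auto
    have "K0 \<noteq> n" using U0 UUn p by auto
    hence K0n: "Suc K0 \<le> n" using K0 by simp
    have L1: "\<not> LL (real (Suc K0)) \<le> p"
    proof
      assume "LL (real (Suc K0)) \<le> p"
      hence "Suc K0 \<le> K0" using Max_ge[OF fin, of "Suc K0"] K0n by (simp add: K0_def[symmetric])
      thus False by simp
    qed
    have u: "0 < UU (real K0)" "UU (real K0) < 1" using UUp[OF K0(1)] U0 p by auto
    have "TP (UU (real K0)) < real (Suc K0)"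
      using fN[OF K0n u] L1 U0 by (smt (verit))
    hence emp: "{K. int K0 + 1 \<le> int K \<and> int K \<le> \<lfloor>TP (UU (real K0))\<rfloor>} \<inter> {..n} = {}"
      by (auto simp: le_floor_iff)
    have "measure_pmf.prob (binomial_pmf n (UU (real K0))) {K. int K0 + 1 \<le> int K \<and> int K \<le> \<lfloor>TP (UU (real K0))\<rfloor>} = 0"
      using u by (subst prob_eq) (auto simp: emp)
    hence "Cu1 K0 \<le> (\<Sum>K\<in>S. bp n K p)" using Fnn unfolding Cu1_def by simp
    thus ?thesis unfolding good1_def F using K0 u by (intro disjI2 exI[of _ K0]) simp
  next
    case False
    define a where "a = Min S"
    define b where "b = Max S"
    have finS: "finite S" unfolding S_def by simp
    have aS: "a \<in> S" and bS: "b \<in> S" using Min_in Max_in finS False unfolding a_def b_def by auto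
    have ab: "a \<le> b" "b \<le> n" using aS bS finS unfolding a_def b_def S_def by auto
    have an: "a - 1 \<le> n" using ab by simp
    have Seq: "S = {a..b}"
    proof
      show "S \<subseteq> {a..b}" using finS unfolding a_def b_def by auto
      show "{a..b} \<subseteq> S"
      proof
        fix K assume K: "K \<in> {a..b}"
        have "TM p \<le> real a" "real b \<le> TP p" using memS aS bS ab by auto
        thus "K \<in> S" using memS[of K] K ab by auto
      qed
    qed
    have Fg: "(\<Sum>K\<in>S. bp n K p) = gs n a b p" unfolding Seq gs_def ..
    have Lb: "LL (real b) \<le> p" and Ua: "p \<le> UU (real a)" using aS bS unfolding S_def by auto
    have TMa: "TM p \<le> real a" and TPb: "real b \<le> TP p" using memS aS bS ab by auto
    have ha: "UU (real (a-1)) < p" if "a \<ge> 1"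
    proof -
      have "a - 1 \<notin> S" using that finS unfolding a_def
        by (metis Min_le diff_less less_le_not_le zero_less_one le_trans)
      moreover have "real (a-1) \<le> TP p" using TPb ab that by simp
      ultimately show ?thesis using memS[of "a-1"] fN[OF an, of p] ab p by force
    qed
    have hb: "p < LL (real (Suc b))" if "b < n"
    proof -
      have "Suc b \<notin> S" using finS unfolding b_def by (metis Max_ge Suc_n_not_le_n)
      moreover have "TM p \<le> real (Suc b)" using TMa ab by simp
      ultimately show ?thesis using memS[of "Suc b"] fN[of "Suc b" p] that p by force
    qed
    obtain r where r: "0 \<le> r" "r \<le> p" "good1 (gs n a b r)"
    proof (cases "a \<ge> 1 \<and> LL (real b) \<le> UU (real (a-1))")
      case True
      define r where "r = UU (real (a-1))"
      have r0: "0 < r" "r < p" using UUp[of "a-1"] ha True ab unfolding r_def by auto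
      have sub: "{K. int (a-1) + 1 \<le> int K \<and> int K \<le> \<lfloor>TP r\<rfloor>} \<inter> {..n} \<subseteq> {a..b}"
      proof
        fix K assume K: "K \<in> {K. int (a-1) + 1 \<le> int K \<and> int K \<le> \<lfloor>TP r\<rfloor>} \<inter> {..n}"
        have "K \<ge> a" using K True by auto
        moreover have "K \<le> b"
        proof (cases "b < n")
          case True
          have "\<not> LL (real (Suc b)) \<le> r" using hb[OF True] r0 by simp
          hence "TP r < real (Suc b)" using fN[of "Suc b" r] True r0 p by auto
          moreover have "real K \<le> TP r" using K by (auto simp: le_floor_iff)
          ultimately show ?thesis by simp
        next
          case False thus ?thesis using K ab by auto
        qed
        ultimately show "K \<in> {a..b}" by simp
      qed
      have "good1 (gs n a b r)" unfolding good1_def Cl1_def Cu1_def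
        using sub_le[OF _ _ sub] r0 p True ab unfolding r_def by (intro disjI2 exI[of _ "a-1"]) auto
      thus ?thesis using r0 by (intro that) auto
    next
      case nc: False
      show ?thesis
      proof (cases "LL (real b) \<le> 0")
        case True
        have "a = 0"
        proof (rule ccontr)
          assume "a \<noteq> 0"
          hence "UU (real (a-1)) < LL (real b)" using nc by auto
          moreover have "a - 1 \<le> n" using ab by simp
          ultimately show False using UUp[of "a-1"] True by linarith
        qed
        hence "good1 (gs n a b 0)" unfolding good1_def Cl1_def Cu1_def using gs_0 by simp
        thus ?thesis using p by (intro that) auto
      next
        case False
        define r where "r = LL (real b)"
        have r0: "0 < r" "r \<le> p" using False Lb unfolding r_def by auto
        have sub: "{K. \<lceil>TM r\<rceil> \<le> int K \<and> int K \<le> int b - 1} \<inter> {..n} \<subseteq> {a..b}"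
        proof
          fix K assume K: "K \<in> {K. \<lceil>TM r\<rceil> \<le> int K \<and> int K \<le> int b - 1} \<inter> {..n}"
          have "K \<ge> a"
          proof (cases "a \<ge> 1")
            case True
            hence "UU (real (a-1)) < r" using nc unfolding r_def by auto
            hence "TM r > real (a-1)" using fN[OF an, of r] r0 p ab by auto
            moreover have "TM r \<le> real K" using K by (auto simp: ceiling_le_iff)
            ultimately show ?thesis using True by linarith
          qed simp
          moreover have "K \<le> b" using K by auto
          ultimately show "K \<in> {a..b}" by simp
        qed
        have "good1 (gs n a b r)" unfolding good1_def Cl1_def Cu1_def
          using sub_le[OF _ _ sub] r0 p ab unfolding r_def by (intro disjI2 exI[of _ b]) auto
        thus ?thesis using r0 by (intro that) auto
      qed
    qed
    obtain s where s: "p \<le> s" "s \<le> 1" "good1 (gs n a b s)"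
    proof (cases "b < n \<and> LL (real (Suc b)) \<le> UU (real a)")
      case True
      define s where "s = LL (real (Suc b))"
      have s0: "p < s" "s < 1" using hb LLl[of "Suc b"] True unfolding s_def by auto
      have sub: "{K. \<lceil>TM s\<rceil> \<le> int K \<and> int K \<le> int (Suc b) - 1} \<inter> {..n} \<subseteq> {a..b}"
      proof
        fix K assume K: "K \<in> {K. \<lceil>TM s\<rceil> \<le> int K \<and> int K \<le> int (Suc b) - 1} \<inter> {..n}"
        have "K \<ge> a"
        proof (cases "a \<ge> 1")
          case True
          hence "UU (real (a-1)) < s" using ha s0 by fastforce
          hence "TM s > real (a-1)" using fN[OF an, of s] s0 p ab by auto
          moreover have "TM s \<le> real K" using K by (auto simp: ceiling_le_iff)
          ultimately show ?thesis using True by linarith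
        qed simp
        moreover have "K \<le> b" using K by auto
        ultimately show "K \<in> {a..b}" by simp
      qed
      have "good1 (gs n a b s)" unfolding good1_def Cl1_def Cu1_def
        using sub_le[OF _ _ sub] s0 p True unfolding s_def by (intro disjI2 exI[of _ "Suc b"]) auto
      thus ?thesis using s0 by (intro that) auto
    next
      case nc: False
      show ?thesis
      proof (cases "UU (real a) \<ge> 1")
        case True
        have "b = n"
        proof (rule ccontr)
          assume "b \<noteq> n"
          hence "b < n" using ab by simp
          hence "UU (real a) < LL (real (Suc b))" using nc by auto
          thus False using LLl[of "Suc b"] \<open>b < n\<close> True by simp
        qed
        hence "good1 (gs n a b 1)" unfolding good1_def Cl1_def Cu1_def using gs_1 ab by simp
        thus ?thesis using p by (intro that) auto
      next
        case False
        define s where "s = UU (real a)"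
        have s0: "p \<le> s" "s < 1" using False Ua unfolding s_def by auto
        have sub: "{K. int a + 1 \<le> int K \<and> int K \<le> \<lfloor>TP s\<rfloor>} \<inter> {..n} \<subseteq> {a..b}"
        proof
          fix K assume K: "K \<in> {K. int a + 1 \<le> int K \<and> int K \<le> \<lfloor>TP s\<rfloor>} \<inter> {..n}"
          have "K \<le> b"
          proof (cases "b < n")
            case True
            hence "\<not> LL (real (Suc b)) \<le> s" using nc unfolding s_def by auto
            hence "TP s < real (Suc b)" using fN[of "Suc b" s] True s0 p by auto
            moreover have "real K \<le> TP s" using K by (auto simp: le_floor_iff)
            ultimately show ?thesis by simp
          next
            case False thus ?thesis using K ab by auto
          qed
          moreover have "K \<ge> a" using K by auto
          ultimately show "K \<in> {a..b}" by simp
        qed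
        have "good1 (gs n a b s)" unfolding good1_def Cl1_def Cu1_def
          using sub_le[OF _ _ sub] s0 p ab UUp[of a] unfolding s_def by (intro disjI2 exI[of _ a]) auto
        thus ?thesis using s0 by (intro that) auto
      qed
    qed
    have "gs n a b p \<ge> min (gs n a b r) (gs n a b s)"
      using quasi_concave[OF n1 ab r(1,2) s(1,2)] .
    hence dis: "gs n a b p \<ge> gs n a b r \<or> gs n a b p \<ge> gs n a b s" by linarith
    note mono = good1_mono
    have "good1 (gs n a b p)"
    proof (cases "gs n a b p \<ge> gs n a b r")
      case True thus ?thesis by (rule mono[OF r(3)])
    next
      case False hence "gs n a b p \<ge> gs n a b s" using dis by linarith
      thus ?thesis by (rule mono[OF s(3)])
    qed
    thus ?thesis unfolding F Fg .
  qed
qed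

end



context bci begin

definition Cl2 :: "nat \<Rightarrow> real" where
  "Cl2 k = measure_pmf.prob (binomial_pmf n (LL (real k)))
          {K. \<lfloor>TM (LL (real k))\<rfloor> + 1 \<le> int K \<and> int K \<le> int k - 1}"
definition Cu2 :: "nat \<Rightarrow> real" where
  "Cu2 k = measure_pmf.prob (binomial_pmf n (UU (real k)))
          {K. int k + 1 \<le> int K \<and> int K \<le> \<lceil>TP (UU (real k))\<rceil> - 1}"

definition good2 :: "real \<Rightarrow> bool" where
  "good2 x \<longleftrightarrow> x \<ge> 1 \<or> (\<exists>k\<le>n.
     (0 < LL (real k) \<and> LL (real k) < 1 \<and> Cl2 k \<le> x) \<or>
     (0 < UU (real k) \<and> UU (real k) < 1 \<and> Cu2 k \<le> x))"

lemma good2_mono: "good2 x \<Longrightarrow> x \<le> y \<Longrightarrow> good2 y"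
  unfolding good2_def by (meson order_trans)

lemma ceil_m1: "int K \<le> \<lceil>x\<rceil> - 1 \<longleftrightarrow> real K < x"
proof -
  have "int K \<le> \<lceil>x\<rceil> - 1 \<longleftrightarrow> int K < \<lceil>x\<rceil>" by linarith
  also have "\<dots> \<longleftrightarrow> real K < x" by (simp add: less_ceiling_iff)
  finally show ?thesis .
qed
lemma floor_p1: "\<lfloor>x\<rfloor> + 1 \<le> int K \<longleftrightarrow> x < real K"
proof -
  have "\<lfloor>x\<rfloor> + 1 \<le> int K \<longleftrightarrow> \<lfloor>x\<rfloor> < int K" by linarith
  also have "\<dots> \<longleftrightarrow> x < real K" by (simp add: floor_less_iff)
  finally show ?thesis .
qed

lemma lowerII:
  assumes p: "0 < p" "p < 1"
  shows "good2 (measure_pmf.prob (binomial_pmf n p) {K. LL (real K) < p \<and> p < UU (real K)})"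
proof -
  define S where "S = {K. K \<le> n \<and> LL (real K) < p \<and> p < UU (real K)}"
  have F: "measure_pmf.prob (binomial_pmf n p) {K. LL (real K) < p \<and> p < UU (real K)} = (\<Sum>K\<in>S. bp n K p)"
    using p by (subst prob_eq) (auto simp: S_def intro!: sum.cong)
  have Fnn: "(\<Sum>K\<in>S. bp n K p) \<ge> 0" using p by (intro sum_nonneg bp_nonneg) auto
  have memS: "K \<le> n \<Longrightarrow> K \<in> S \<longleftrightarrow> TM p < real K \<and> real K < TP p" for K
    using fN[of K p] p unfolding S_def by auto
  show ?thesis
  proof (cases "S = {}")
    case True
    define K0 where "K0 = Max {K. K \<le> n \<and> LL (real K) < p}"
    have fin: "finite {K. K \<le> n \<and> LL (real K) < p}" by simp
    have ne: "0 \<in> {K. K \<le> n \<and> LL (real K) < p}" using LL0 p by simp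
    have K0: "K0 \<le> n" "LL (real K0) < p" using Max_in[OF fin] ne unfolding K0_def by blast+
    have "K0 \<notin> S" using True by simp
    hence U0: "UU (real K0) \<le> p" using K0 unfolding S_def by auto
    have "K0 \<noteq> n" using U0 UUn p by auto
    hence K0n: "Suc K0 \<le> n" using K0 by simp
    have L1: "\<not> LL (real (Suc K0)) < p"
    proof
      assume "LL (real (Suc K0)) < p"
      hence "Suc K0 \<le> K0" using Max_ge[OF fin, of "Suc K0"] K0n by (simp add: K0_def[symmetric])
      thus False by simp
    qed
    have u: "0 < UU (real K0)" "UU (real K0) < 1" using UUp[OF K0(1)] U0 p by auto
    have "TP (UU (real K0)) \<le> real (Suc K0)"
      using fN[OF K0n u] L1 U0 by (smt (verit))
    hence emp: "{K. int K0 + 1 \<le> int K \<and> int K \<le> \<lceil>TP (UU (real K0))\<rceil> - 1} \<inter> {..n} = {}"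
      by (auto simp: ceil_m1 less_ceiling_iff)
    have "measure_pmf.prob (binomial_pmf n (UU (real K0))) {K. int K0 + 1 \<le> int K \<and> int K \<le> \<lceil>TP (UU (real K0))\<rceil> - 1}
       = (\<Sum>K\<in>{K. int K0 + 1 \<le> int K \<and> int K \<le> \<lceil>TP (UU (real K0))\<rceil> - 1} \<inter> {..n}. bp n K (UU (real K0)))"
      using u by (intro prob_eq) auto
    also have "\<dots> = 0" unfolding emp by simp
    finally have "measure_pmf.prob (binomial_pmf n (UU (real K0))) {K. int K0 + 1 \<le> int K \<and> int K \<le> \<lceil>TP (UU (real K0))\<rceil> - 1} = 0" .
    hence "Cu2 K0 \<le> (\<Sum>K\<in>S. bp n K p)" using Fnn unfolding Cu2_def by simp
    thus ?thesis unfolding good2_def F using K0 u by (intro disjI2 exI[of _ K0]) simp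
  next
    case False
    define a where "a = Min S"
    define b where "b = Max S"
    have finS: "finite S" unfolding S_def by simp
    have aS: "a \<in> S" and bS: "b \<in> S" using Min_in Max_in finS False unfolding a_def b_def by auto
    have ab: "a \<le> b" "b \<le> n" using aS bS finS unfolding a_def b_def S_def by auto
    have an: "a - 1 \<le> n" using ab by simp
    have Seq: "S = {a..b}"
    proof
      show "S \<subseteq> {a..b}" using finS unfolding a_def b_def by auto
      show "{a..b} \<subseteq> S"
      proof
        fix K assume K: "K \<in> {a..b}"
        have "TM p < real a" "real b < TP p" using memS aS bS ab by auto
        thus "K \<in> S" using memS[of K] K ab by auto
      qed
    qed
    have Fg: "(\<Sum>K\<in>S. bp n K p) = gs n a b p" unfolding Seq gs_def ..
    have Lb: "LL (real b) < p" and Ua: "p < UU (real a)" using aS bS unfolding S_def by auto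
    have TMa: "TM p < real a" and TPb: "real b < TP p" using memS aS bS ab by auto
    have ha: "UU (real (a-1)) \<le> p" if "a \<ge> 1"
    proof -
      have "a - 1 \<notin> S" using that finS unfolding a_def
        by (metis Min_le diff_less less_le_not_le zero_less_one le_trans)
      moreover have "real (a-1) < TP p" using TPb ab that by simp
      ultimately show ?thesis using memS[of "a-1"] fN[OF an, of p] ab p by force
    qed
    have hb: "p \<le> LL (real (Suc b))" if "b < n"
    proof -
      have "Suc b \<notin> S" using finS unfolding b_def by (metis Max_ge Suc_n_not_le_n)
      moreover have "TM p < real (Suc b)" using TMa ab by simp
      ultimately show ?thesis using memS[of "Suc b"] fN[of "Suc b" p] that p by force
    qed
    obtain r where r: "0 \<le> r" "r \<le> p" "good2 (gs n a b r)"
    proof (cases "a \<ge> 1 \<and> LL (real b) < UU (real (a-1))")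
      case True
      define r where "r = UU (real (a-1))"
      have r0: "0 < r" "r \<le> p" using UUp[of "a-1"] ha True ab unfolding r_def by auto
      have sub: "{K. int (a-1) + 1 \<le> int K \<and> int K \<le> \<lceil>TP r\<rceil> - 1} \<inter> {..n} \<subseteq> {a..b}"
      proof
        fix K assume K: "K \<in> {K. int (a-1) + 1 \<le> int K \<and> int K \<le> \<lceil>TP r\<rceil> - 1} \<inter> {..n}"
        have "K \<ge> a" using K True by auto
        moreover have "K \<le> b"
        proof (cases "b < n")
          case True
          have "\<not> LL (real (Suc b)) < r" using hb[OF True] r0 by simp
          hence "TP r \<le> real (Suc b)" using fN[of "Suc b" r] True r0 p by auto
          moreover have "real K < TP r" using K by (auto simp: ceil_m1 less_ceiling_iff)
          ultimately show ?thesis by simp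
        next
          case False thus ?thesis using K ab by auto
        qed
        ultimately show "K \<in> {a..b}" by simp
      qed
      have "good2 (gs n a b r)" unfolding good2_def Cl2_def Cu2_def
        using sub_le[OF _ _ sub] r0 p True ab unfolding r_def by (intro disjI2 exI[of _ "a-1"]) auto
      thus ?thesis using r0 by (intro that) auto
    next
      case nc: False
      show ?thesis
      proof (cases "LL (real b) \<le> 0")
        case True
        have "a = 0"
        proof (rule ccontr)
          assume "a \<noteq> 0"
          hence "UU (real (a-1)) \<le> LL (real b)" using nc by auto
          moreover have "a - 1 \<le> n" using ab by simp
          ultimately show False using UUp[of "a-1"] True by linarith
        qed
        hence "good2 (gs n a b 0)" unfolding good2_def Cl2_def Cu2_def using gs_0 by simp
        thus ?thesis using p by (intro that) auto
      next
        case False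
        define r where "r = LL (real b)"
        have r0: "0 < r" "r \<le> p" using False Lb unfolding r_def by auto
        have sub: "{K. \<lfloor>TM r\<rfloor> + 1 \<le> int K \<and> int K \<le> int b - 1} \<inter> {..n} \<subseteq> {a..b}"
        proof
          fix K assume K: "K \<in> {K. \<lfloor>TM r\<rfloor> + 1 \<le> int K \<and> int K \<le> int b - 1} \<inter> {..n}"
          have "K \<ge> a"
          proof (cases "a \<ge> 1")
            case True
            hence "UU (real (a-1)) \<le> r" using nc unfolding r_def by auto
            hence "TM r \<ge> real (a-1)" using fN[OF an, of r] r0 p ab by auto
            moreover have "TM r < real K" using K by (auto simp: floor_p1)
            ultimately show ?thesis using True by linarith
          qed simp
          moreover have "K \<le> b" using K by auto
          ultimately show "K \<in> {a..b}" by simp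
        qed
        have "good2 (gs n a b r)" unfolding good2_def Cl2_def Cu2_def
          using sub_le[OF _ _ sub] r0 p ab unfolding r_def by (intro disjI2 exI[of _ b]) auto
        thus ?thesis using r0 by (intro that) auto
      qed
    qed
    obtain s where s: "p \<le> s" "s \<le> 1" "good2 (gs n a b s)"
    proof (cases "b < n \<and> LL (real (Suc b)) \<le> UU (real a)")
      case True
      define s where "s = LL (real (Suc b))"
      have s0: "p \<le> s" "s < 1" using hb LLl[of "Suc b"] True unfolding s_def by auto
      have sub: "{K. \<lfloor>TM s\<rfloor> + 1 \<le> int K \<and> int K \<le> int (Suc b) - 1} \<inter> {..n} \<subseteq> {a..b}"
      proof
        fix K assume K: "K \<in> {K. \<lfloor>TM s\<rfloor> + 1 \<le> int K \<and> int K \<le> int (Suc b) - 1} \<inter> {..n}"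
        have "K \<ge> a"
        proof (cases "a \<ge> 1")
          case True
          hence "UU (real (a-1)) \<le> s" using ha s0 by fastforce
          hence "TM s \<ge> real (a-1)" using fN[OF an, of s] s0 p ab by auto
          moreover have "TM s < real K" using K by (auto simp: floor_p1)
          ultimately show ?thesis using True by linarith
        qed simp
        moreover have "K \<le> b" using K by auto
        ultimately show "K \<in> {a..b}" by simp
      qed
      have "good2 (gs n a b s)" unfolding good2_def Cl2_def Cu2_def
        using sub_le[OF _ _ sub] s0 p True unfolding s_def by (intro disjI2 exI[of _ "Suc b"]) auto
      thus ?thesis using s0 by (intro that) auto
    next
      case nc: False
      show ?thesis
      proof (cases "UU (real a) \<ge> 1")
        case True
        have "b = n"
        proof (rule ccontr)
          assume "b \<noteq> n"
          hence "b < n" using ab by simp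
          hence "UU (real a) < LL (real (Suc b))" using nc by auto
          thus False using LLl[of "Suc b"] \<open>b < n\<close> True by simp
        qed
        hence "good2 (gs n a b 1)" unfolding good2_def Cl2_def Cu2_def using gs_1 ab by simp
        thus ?thesis using p by (intro that) auto
      next
        case False
        define s where "s = UU (real a)"
        have s0: "p \<le> s" "s < 1" using False Ua unfolding s_def by auto
        have sub: "{K. int a + 1 \<le> int K \<and> int K \<le> \<lceil>TP s\<rceil> - 1} \<inter> {..n} \<subseteq> {a..b}"
        proof
          fix K assume K: "K \<in> {K. int a + 1 \<le> int K \<and> int K \<le> \<lceil>TP s\<rceil> - 1} \<inter> {..n}"
          have "K \<le> b"
          proof (cases "b < n")
            case True
            hence "\<not> LL (real (Suc b)) < s" using nc unfolding s_def by auto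
            hence "TP s \<le> real (Suc b)" using fN[of "Suc b" s] True s0 p by auto
            moreover have "real K < TP s" using K by (auto simp: ceil_m1 less_ceiling_iff)
            ultimately show ?thesis by simp
          next
            case False thus ?thesis using K ab by auto
          qed
          moreover have "K \<ge> a" using K by auto
          ultimately show "K \<in> {a..b}" by simp
        qed
        have "good2 (gs n a b s)" unfolding good2_def Cl2_def Cu2_def
          using sub_le[OF _ _ sub] s0 p ab UUp[of a] unfolding s_def by (intro disjI2 exI[of _ a]) auto
        thus ?thesis using s0 by (intro that) auto
      qed
    qed
    have "gs n a b p \<ge> min (gs n a b r) (gs n a b s)"
      using quasi_concave[OF n1 ab r(1,2) s(1,2)] .
    hence dis: "gs n a b p \<ge> gs n a b r \<or> gs n a b p \<ge> gs n a b s" by linarith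
    note mono = good2_mono
    have "good2 (gs n a b p)"
    proof (cases "gs n a b p \<ge> gs n a b r")
      case True thus ?thesis by (rule mono[OF r(3)])
    next
      case False hence "gs n a b p \<ge> gs n a b s" using dis by linarith
      thus ?thesis by (rule mono[OF s(3)])
    qed
    thus ?thesis unfolding F Fg .
  qed
qed

end



context bci begin

definition F1 :: "real \<Rightarrow> real" where
  "F1 p = measure_pmf.prob (binomial_pmf n p) {K. LL (real K) \<le> p \<and> p \<le> UU (real K)}"
definition F2 :: "real \<Rightarrow> real" where
  "F2 p = measure_pmf.prob (binomial_pmf n p) {K. LL (real K) < p \<and> p < UU (real K)}"

lemma inf_le_lim:
  fixes G f :: "real \<Rightarrow> real"
  assumes nn: "\<And>q. 0 < q \<Longrightarrow> q < 1 \<Longrightarrow> G q \<ge> 0"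
    and ev: "eventually (\<lambda>q. 0 < q \<and> q < 1 \<and> G q \<le> f q) F" and F: "F \<noteq> bot" and lim: "(f \<longlongrightarrow> l) F"
  shows "(INF q\<in>{0<..<1}. G q) \<le> l"
proof -
  have bdd: "bdd_below (G ` {0<..<1})" using nn by (intro bdd_belowI2[of _ 0]) auto
  have "eventually (\<lambda>q. (INF q\<in>{0<..<1}. G q) \<le> f q) F"
    using ev by eventually_elim (use bdd in \<open>auto intro: cINF_lower2\<close>)
  then show ?thesis using tendsto_le[OF F lim tendsto_const] by blast
qed

lemma F1_nn: "F1 q \<ge> 0" unfolding F1_def by simp
lemma F2_nn: "F2 q \<ge> 0" unfolding F2_def by simp

lemma F1_sum: "0 < q \<Longrightarrow> q < 1 \<Longrightarrow> F1 q = (\<Sum>K\<in>{K. K \<le> n \<and> LL (real K) \<le> q \<and> q \<le> UU (real K)}. bp n K q)"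
  unfolding F1_def by (subst prob_eq) (auto intro!: sum.cong)
lemma F2_sum: "0 < q \<Longrightarrow> q < 1 \<Longrightarrow> F2 q = (\<Sum>K\<in>{K. K \<le> n \<and> LL (real K) < q \<and> q < UU (real K)}. bp n K q)"
  unfolding F2_def by (subst prob_eq) (auto intro!: sum.cong)

lemma upperCl1:
  assumes k: "k \<le> n" "0 < LL (real k)" "LL (real k) < 1"
  shows "(INF p\<in>{0<..<1}. F1 p) \<le> Cl1 k"
proof -
  define s where "s = LL (real k)"
  have s0: "0 < s" "s < 1" using k unfolding s_def by auto
  define T where "T = {K. \<lceil>TM s\<rceil> \<le> int K \<and> int K \<le> int k - 1}"
  define f where "f q = (\<Sum>K\<in>T \<inter> {..n}. bp n K q)" for q
  have Cl: "Cl1 k = f s" unfolding Cl1_def f_def T_def s_def[symmetric] using s0 by (intro prob_eq) auto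
  have TPs: "TP s = real k" using fN[OF k(1) s0] unfolding s_def by auto
  define A where "A = insert 0 (UU ` {K. K \<le> n \<and> UU (real K) < s})"
  define q0 where "q0 = Max A"
  have finA: "finite A" "A \<noteq> {}" unfolding A_def by auto
  have q0s: "q0 < s" unfolding q0_def using finA s0 by (subst Max_less_iff) (auto simp: A_def)
  have q00: "0 \<le> q0" unfolding q0_def using finA by (intro Max_ge) (auto simp: A_def)
  have ev: "eventually (\<lambda>q. 0 < q \<and> q < 1 \<and> F1 q \<le> f q) (at_left s)"
    using eventually_at_left_real[OF q0s]
  proof eventually_elim
    case (elim q)
    hence q: "q0 < q" "q < s" "0 < q" "q < 1" using q00 s0 by auto
    have sub: "{K. K \<le> n \<and> LL (real K) \<le> q \<and> q \<le> UU (real K)} \<subseteq> T \<inter> {..n}"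
    proof
      fix K assume K: "K \<in> {K. K \<le> n \<and> LL (real K) \<le> q \<and> q \<le> UU (real K)}"
      have Kn: "K \<le> n" using K by simp
      have "LL (real K) < s" using K q by simp
      hence "real K < TP s" using fN[OF Kn s0] by auto
      hence "int K \<le> int k - 1" using TPs by simp
      moreover have "s \<le> UU (real K)"
      proof (rule ccontr)
        assume "\<not> s \<le> UU (real K)"
        hence "UU (real K) \<in> A" unfolding A_def using Kn by auto
        hence "UU (real K) \<le> q0" unfolding q0_def using finA by (intro Max_ge) auto
        thus False using K q by simp
      qed
      hence "TM s \<le> real K" using fN[OF Kn s0] by auto
      hence "\<lceil>TM s\<rceil> \<le> int K" by (simp add: ceiling_le_iff)
      ultimately show "K \<in> T \<inter> {..n}" unfolding T_def using Kn by simp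
    qed
    have "F1 q \<le> f q" unfolding F1_sum[OF q(3,4)] f_def
      by (rule sum_mono2) (use sub q bp_nonneg in auto)
    thus ?case using q by simp
  qed
  have lim: "(f \<longlongrightarrow> f s) (at_left s)"
    using bp_cont[where A="T \<inter> {..n}" and n=n and x=s] unfolding isCont_def f_def[abs_def]
    by (simp add: filterlim_at_split)
  show ?thesis unfolding Cl by (rule inf_le_lim[OF _ ev _ lim]) (auto simp: F1_nn)
qed

lemma upperCu1:
  assumes k: "k \<le> n" "0 < UU (real k)" "UU (real k) < 1"
  shows "(INF p\<in>{0<..<1}. F1 p) \<le> Cu1 k"
proof -
  define s where "s = UU (real k)"
  have s0: "0 < s" "s < 1" using k unfolding s_def by auto
  define T where "T = {K. int k + 1 \<le> int K \<and> int K \<le> \<lfloor>TP s\<rfloor>}"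
  define f where "f q = (\<Sum>K\<in>T \<inter> {..n}. bp n K q)" for q
  have Cu: "Cu1 k = f s" unfolding Cu1_def f_def T_def s_def[symmetric] using s0 by (intro prob_eq) auto
  have TMs: "TM s = real k" using fN[OF k(1) s0] unfolding s_def by auto
  define A where "A = insert 1 (LL ` {K. K \<le> n \<and> s < LL (real K)})"
  define q1 where "q1 = Min A"
  have finA: "finite A" "A \<noteq> {}" unfolding A_def by auto
  have q1s: "s < q1" unfolding q1_def using finA s0 by (subst Min_gr_iff) (auto simp: A_def)
  have q11: "q1 \<le> 1" unfolding q1_def using finA by (intro Min_le) (auto simp: A_def)
  have ev: "eventually (\<lambda>q. 0 < q \<and> q < 1 \<and> F1 q \<le> f q) (at_right s)"
    using eventually_at_right_real[OF q1s]
  proof eventually_elim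
    case (elim q)
    hence q: "s < q" "q < q1" "0 < q" "q < 1" using q11 s0 by auto
    have sub: "{K. K \<le> n \<and> LL (real K) \<le> q \<and> q \<le> UU (real K)} \<subseteq> T \<inter> {..n}"
    proof
      fix K assume K: "K \<in> {K. K \<le> n \<and> LL (real K) \<le> q \<and> q \<le> UU (real K)}"
      have Kn: "K \<le> n" using K by simp
      have "s < UU (real K)" using K q by simp
      hence "TM s < real K" using fN[OF Kn s0] by auto
      hence "int k + 1 \<le> int K" using TMs by simp
      moreover have "LL (real K) \<le> s"
      proof (rule ccontr)
        assume "\<not> LL (real K) \<le> s"
        hence "LL (real K) \<in> A" unfolding A_def using Kn by auto
        hence "q1 \<le> LL (real K)" unfolding q1_def using finA by (intro Min_le) auto
        thus False using K q by simp
      qed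
      hence "real K \<le> TP s" using fN[OF Kn s0] by auto
      hence "int K \<le> \<lfloor>TP s\<rfloor>" by (simp add: le_floor_iff)
      ultimately show "K \<in> T \<inter> {..n}" unfolding T_def using Kn by simp
    qed
    have "F1 q \<le> f q" unfolding F1_sum[OF q(3,4)] f_def
      by (rule sum_mono2) (use sub q bp_nonneg in auto)
    thus ?case using q by simp
  qed
  have lim: "(f \<longlongrightarrow> f s) (at_right s)"
    using bp_cont[where A="T \<inter> {..n}" and n=n and x=s] unfolding isCont_def f_def[abs_def]
    by (simp add: filterlim_at_split)
  show ?thesis unfolding Cu by (rule inf_le_lim[OF _ ev _ lim]) (auto simp: F1_nn)
qed

lemma inf_le_val:
  assumes "0 < s" "s < 1" shows "(INF p\<in>{0<..<1}. F2 p) \<le> F2 s"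
  using assms by (intro cINF_lower bdd_belowI2[of _ 0]) (auto simp: F2_nn)

lemma upperCl2:
  assumes k: "k \<le> n" "0 < LL (real k)" "LL (real k) < 1"
  shows "(INF p\<in>{0<..<1}. F2 p) \<le> Cl2 k"
proof -
  define s where "s = LL (real k)"
  have s0: "0 < s" "s < 1" using k unfolding s_def by auto
  have TPs: "TP s = real k" using fN[OF k(1) s0] unfolding s_def by auto
  have "F2 s = Cl2 k"
  proof -
    have "{K. K \<le> n \<and> LL (real K) < s \<and> s < UU (real K)} =
          {K. \<lfloor>TM s\<rfloor> + 1 \<le> int K \<and> int K \<le> int k - 1} \<inter> {..n}"
      using fN[OF _ s0] TPs by (auto simp: floor_p1)
    thus ?thesis unfolding F2_sum[OF s0] Cl2_def s_def[symmetric] using s0 by (subst prob_eq) auto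
  qed
  thus ?thesis using inf_le_val[OF s0] by simp
qed

lemma upperCu2:
  assumes k: "k \<le> n" "0 < UU (real k)" "UU (real k) < 1"
  shows "(INF p\<in>{0<..<1}. F2 p) \<le> Cu2 k"
proof -
  define s where "s = UU (real k)"
  have s0: "0 < s" "s < 1" using k unfolding s_def by auto
  have TMs: "TM s = real k" using fN[OF k(1) s0] unfolding s_def by auto
  have "F2 s = Cu2 k"
  proof -
    have "{K. K \<le> n \<and> LL (real K) < s \<and> s < UU (real K)} =
          {K. int k + 1 \<le> int K \<and> int K \<le> \<lceil>TP s\<rceil> - 1} \<inter> {..n}"
      using fN[OF _ s0] TMs by (auto simp: ceil_m1 less_ceiling_iff)
    thus ?thesis unfolding F2_sum[OF s0] Cu2_def s_def[symmetric] using s0 by (subst prob_eq) auto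
  qed
  thus ?thesis using inf_le_val[OF s0] by simp
qed

end



context bci begin

lemma mainI:
  assumes ex: "\<exists>k\<le>n. (0 < LL (real k) \<and> LL (real k) < 1) \<or> (0 < UU (real k) \<and> UU (real k) < 1)"
  shows "(INF p\<in>{0<..<1}. F1 p) = Min ({Cl1 k | k. k \<le> n \<and> 0 < LL (real k) \<and> LL (real k) < 1}
                 \<union> {Cu1 k | k. k \<le> n \<and> 0 < UU (real k) \<and> UU (real k) < 1})"
    (is "?I = Min ?CS")
proof -
  have fin: "finite ?CS"
  proof -
    have "?CS \<subseteq> Cl1 ` {..n} \<union> Cu1 ` {..n}" by auto
    thus ?thesis by (rule finite_subset) simp
  qed
  have ne: "?CS \<noteq> {}" using ex by blast
  have le1: "x \<le> 1" if "x \<in> ?CS" for x using that unfolding Cl1_def Cu1_def by auto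
  have "?I \<le> Min ?CS"
  proof -
    have "Min ?CS \<in> ?CS" using Min_in[OF fin ne] .
    thus ?thesis using upperCl1 upperCu1 by auto
  qed
  moreover have "Min ?CS \<le> ?I"
  proof (rule cINF_greatest)
    show "{0<..<(1::real)} \<noteq> {}" by auto
    fix p :: real assume p: "p \<in> {0<..<1}"
    have g: "good1 (F1 p)" unfolding F1_def using lowerI p by simp
    show "Min ?CS \<le> F1 p"
    proof (cases "F1 p \<ge> 1")
      case True
      obtain x where x: "x \<in> ?CS" using ne by blast
      have "Min ?CS \<le> x" by (rule Min_le[OF fin x])
      moreover have "x \<le> 1" by (rule le1[OF x])
      ultimately show ?thesis using True by linarith
    next
      case False
      then obtain k where "k \<le> n" "(0 < LL (real k) \<and> LL (real k) < 1 \<and> Cl1 k \<le> F1 p) \<or>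
          (0 < UU (real k) \<and> UU (real k) < 1 \<and> Cu1 k \<le> F1 p)"
        using g False unfolding good1_def by blast
      then obtain C where C: "C \<in> ?CS" "C \<le> F1 p" by blast
      have "Min ?CS \<le> C" by (rule Min_le[OF fin C(1)])
      thus ?thesis using C(2) by linarith
    qed
  qed
  ultimately show ?thesis by simp
qed

lemma mainII:
  assumes ex: "\<exists>k\<le>n. (0 < LL (real k) \<and> LL (real k) < 1) \<or> (0 < UU (real k) \<and> UU (real k) < 1)"
  shows "(INF p\<in>{0<..<1}. F2 p) = Min ({Cl2 k | k. k \<le> n \<and> 0 < LL (real k) \<and> LL (real k) < 1}
                 \<union> {Cu2 k | k. k \<le> n \<and> 0 < UU (real k) \<and> UU (real k) < 1})"
    (is "?I = Min ?CS")
proof -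
  have fin: "finite ?CS"
  proof -
    have "?CS \<subseteq> Cl2 ` {..n} \<union> Cu2 ` {..n}" by auto
    thus ?thesis by (rule finite_subset) simp
  qed
  have ne: "?CS \<noteq> {}" using ex by blast
  have le1: "x \<le> 1" if "x \<in> ?CS" for x using that unfolding Cl2_def Cu2_def by auto
  have "?I \<le> Min ?CS"
  proof -
    have "Min ?CS \<in> ?CS" using Min_in[OF fin ne] .
    thus ?thesis using upperCl2 upperCu2 by auto
  qed
  moreover have "Min ?CS \<le> ?I"
  proof (rule cINF_greatest)
    show "{0<..<(1::real)} \<noteq> {}" by auto
    fix p :: real assume p: "p \<in> {0<..<1}"
    have g: "good2 (F2 p)" unfolding F2_def using lowerII p by simp
    show "Min ?CS \<le> F2 p"
    proof (cases "F2 p \<ge> 1")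
      case True
      obtain x where x: "x \<in> ?CS" using ne by blast
      have "Min ?CS \<le> x" by (rule Min_le[OF fin x])
      moreover have "x \<le> 1" by (rule le1[OF x])
      ultimately show ?thesis using True by linarith
    next
      case False
      then obtain k where "k \<le> n" "(0 < LL (real k) \<and> LL (real k) < 1 \<and> Cl2 k \<le> F2 p) \<or>
          (0 < UU (real k) \<and> UU (real k) < 1 \<and> Cu2 k \<le> F2 p)"
        using g False unfolding good2_def by blast
      then obtain C where C: "C \<in> ?CS" "C \<le> F2 p" by blast
      have "Min ?CS \<le> C" by (rule Min_le[OF fin C(1)])
      thus ?thesis using C(2) by linarith
    qed
  qed
  ultimately show ?thesis by simp
qed

end

theorem theorem2:
  fixes n :: nat and \<delta> :: real
  assumes "n \<ge> 1" and "0 < \<delta>" and "\<delta> < 1"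
    and "\<exists>k\<le>n. (0 < confL n \<delta> k \<and> confL n \<delta> k < 1) \<or>
                 (0 < confU n \<delta> k \<and> confU n \<delta> k < 1)"
  shows "(INF p\<in>{0<..<1::real}. measure_pmf.prob (binomial_pmf n p)
            {K. confL n \<delta> K \<le> p \<and> p \<le> confU n \<delta> K})
         = Min ({Cl n \<delta> k | k. k \<le> n \<and> 0 < confL n \<delta> k \<and> confL n \<delta> k < 1}
              \<union> {Cu n \<delta> k | k. k \<le> n \<and> 0 < confU n \<delta> k \<and> confU n \<delta> k < 1})
         \<and> (INF p\<in>{0<..<1::real}. measure_pmf.prob (binomial_pmf n p)
            {K. confL n \<delta> K < p \<and> p < confU n \<delta> K})
         = Min ({Cl' n \<delta> k | k. k \<le> n \<and> 0 < confL n \<delta> k \<and> confL n \<delta> k < 1}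
              \<union> {Cu' n \<delta> k | k. k \<le> n \<and> 0 < confU n \<delta> k \<and> confU n \<delta> k < 1})"
proof -
  have c: "ln (2/\<delta>) > 0" using assms(2,3) by simp
  interpret B: bci n "ln (2/\<delta>)" using assms(1) c by unfold_locales
  have eL: "confL n \<delta> k = B.LL (real k)" for k unfolding confL_def B.LL_def ..
  have eU: "confU n \<delta> k = B.UU (real k)" for k unfolding confU_def B.UU_def ..
  have eTM: "Tminus n \<delta> = B.TM" unfolding Tminus_def[abs_def] B.TM_def[abs_def] ..
  have eTP: "Tplus n \<delta> = B.TP" unfolding Tplus_def[abs_def] B.TP_def[abs_def] ..
  have eCl: "Cl n \<delta> k = B.Cl1 k" for k unfolding Cl_def B.Cl1_def eL eTM ..
  have eCu: "Cu n \<delta> k = B.Cu1 k" for k unfolding Cu_def B.Cu1_def eU eTP ..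
  have eCl': "Cl' n \<delta> k = B.Cl2 k" for k unfolding Cl'_def B.Cl2_def eL eTM ..
  have eCu': "Cu' n \<delta> k = B.Cu2 k" for k unfolding Cu'_def B.Cu2_def eU eTP ..
  have ex: "\<exists>k\<le>n. (0 < B.LL (real k) \<and> B.LL (real k) < 1) \<or> (0 < B.UU (real k) \<and> B.UU (real k) < 1)"
    using assms(4) unfolding eL eU .
  show ?thesis
    unfolding eL eU eCl eCu eCl' eCu'
    using B.mainI[OF ex] B.mainII[OF ex] unfolding B.F1_def B.F2_def by simp
qed


end
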